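(* Let $c>0$ and let $G$ be an $n$-vertex graph. If $\delta^{(2)}(G)\ge cn$, then $\hat\delta^{(2,2)}(G)\ge 2-1/c$.
   Context: $\delta^{(2)}(G)=\min\{|N(u)\cap N(v)|: u\ne v,\ uv\notin E(G)\}$. $\hat\delta^{(2,2)}(G)$ is the minimum, over all pairs of distinct non-adjacent vertices $u,v$, of the edge density $e(G[N(u)\cap N(v)])/\binom{|N(u)\cap N(v)|}{2}$ of the subgraph induced on their common neighborhood. *)

theory Defs
  imports Complex_Main
begin

definition simple_graph :: "'a set \<Rightarrow> ('a \<Rightarrow> 'a \<Rightarrow> bool) \<Rightarrow> bool" where
  "simple_graph V E \<longleftrightarrow> finite V \<and> (\<forall>u v. E u v \<longrightarrow> u \<in> V \<and> v \<in> V)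
     \<and> (\<forall>u v. E u v \<longrightarrow> E v u) \<and> (\<forall>u. \<not> E u u)"

definition nbhd :: "'a set \<Rightarrow> ('a \<Rightarrow> 'a \<Rightarrow> bool) \<Rightarrow> 'a \<Rightarrow> 'a set" where
  "nbhd V E u = {w \<in> V. E u w}"

definition common_nbhd :: "'a set \<Rightarrow> ('a \<Rightarrow> 'a \<Rightarrow> bool) \<Rightarrow> 'a \<Rightarrow> 'a \<Rightarrow> 'a set" where
  "common_nbhd V E u v = nbhd V E u \<inter> nbhd V E v"

definition induced_edges :: "('a \<Rightarrow> 'a \<Rightarrow> bool) \<Rightarrow> 'a set \<Rightarrow> nat" where
  "induced_edges E S = card {{x, y} | x y. x \<in> S \<and> y \<in> S \<and> E x y}"

text \<open>Edge density e(G[S]) / binom(|S|,2) (HOL convention: x/0 = 0).\<close>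
definition edge_density :: "('a \<Rightarrow> 'a \<Rightarrow> bool) \<Rightarrow> 'a set \<Rightarrow> real" where
  "edge_density E S = real (induced_edges E S) / real (card S choose 2)"

text \<open>Pairs of distinct non-adjacent vertices, over which the minima
  delta^(2) and hat-delta^(2,2) are taken.\<close>
definition nonadj_pair :: "'a set \<Rightarrow> ('a \<Rightarrow> 'a \<Rightarrow> bool) \<Rightarrow> 'a \<Rightarrow> 'a \<Rightarrow> bool" where
  "nonadj_pair V E u v \<longleftrightarrow> u \<in> V \<and> v \<in> V \<and> u \<noteq> v \<and> \<not> E u v"

end

theory Submission
  imports Defs
begin

lemma pairs_le_edges:
  assumes fin: "finite S" and irr: "\<forall>u. \<not> E u u"
  shows "card (SIGMA x:S. {y\<in>S. E x y}) \<le> 2 * induced_edges E S"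
proof -
  define Ed where "Ed = {{x, y} | x y. x \<in> S \<and> y \<in> S \<and> E x y}"
  define F where "F = (\<lambda>e::'a set. {(x,y). x \<in> e \<and> y \<in> e \<and> x \<noteq> y})"
  have finEd: "finite Ed"
  proof -
    have "Ed \<subseteq> Pow S" unfolding Ed_def by auto
    thus ?thesis using fin by (meson finite_Pow_iff finite_subset)
  qed
  have sub: "(SIGMA x:S. {y\<in>S. E x y}) \<subseteq> (\<Union>e\<in>Ed. F e)"
  proof
    fix p assume "p \<in> (SIGMA x:S. {y\<in>S. E x y})"
    then obtain x y where p: "p = (x,y)" "x \<in> S" "y \<in> S" "E x y" by auto
    have "x \<noteq> y" using p irr by auto
    hence "p \<in> F {x,y}" using p unfolding F_def by auto
    moreover have "{x,y} \<in> Ed" using p unfolding Ed_def by auto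
    ultimately show "p \<in> (\<Union>e\<in>Ed. F e)" by auto
  qed
  have Fle: "card (F e) \<le> 2" if "e \<in> Ed" for e
  proof -
    obtain a b where e: "e = {a,b}" using \<open>e \<in> Ed\<close> unfolding Ed_def by auto
    have "F e \<subseteq> {(a,b),(b,a)}" unfolding F_def e by auto
    hence "card (F e) \<le> card {(a,b),(b,a)}" by (intro card_mono) auto
    also have "\<dots> \<le> 2" by (cases "a = b") auto
    finally show ?thesis .
  qed
  have "card (SIGMA x:S. {y\<in>S. E x y}) \<le> card (\<Union>e\<in>Ed. F e)"
  proof (rule card_mono[OF _ sub])
    have "\<And>e. e \<in> Ed \<Longrightarrow> finite (F e)"
    proof -
      fix e assume "e \<in> Ed"
      then obtain a b where e: "e = {a,b}" unfolding Ed_def by auto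
      have "F e \<subseteq> {(a,b),(b,a)}" unfolding F_def e by auto
      thus "finite (F e)" by (rule finite_subset) auto
    qed
    thus "finite (\<Union>e\<in>Ed. F e)" using finEd by simp
  qed
  also have "\<dots> \<le> (\<Sum>e\<in>Ed. card (F e))" by (rule card_UN_le[OF finEd])
  also have "\<dots> \<le> (\<Sum>e\<in>Ed. 2)" by (rule sum_mono) (use Fle in auto)
  also have "\<dots> = 2 * induced_edges E S" unfolding induced_edges_def Ed_def by simp
  finally show ?thesis .
qed

lemma two_choose: "2 * (s choose 2) = s * (s - 1)"
proof -
  have "even (s * (s - 1))" by (cases "even s") auto
  thus ?thesis by (simp add: choose_two)
qed

theorem proposition4p4:
  fixes V :: "'a set" and E :: "'a \<Rightarrow> 'a \<Rightarrow> bool" and c :: real and n :: nat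
  assumes "simple_graph V E"
    and "card V = n"
    and "c > 0"
    and "\<forall>u v. nonadj_pair V E u v \<longrightarrow> real (card (common_nbhd V E u v)) \<ge> c * real n"
  shows "\<forall>u v. nonadj_pair V E u v \<longrightarrow> edge_density E (common_nbhd V E u v) \<ge> 2 - 1 / c"
proof (intro allI impI)
  fix u v assume uv: "nonadj_pair V E u v"
  note G = assms(1)[unfolded simple_graph_def]
  have finV: "finite V" using G by blast
  define S where "S = common_nbhd V E u v"
  define s where "s = card S"
  define d where "d = 2 - 1 / c"
  have SV: "S \<subseteq> V" unfolding S_def common_nbhd_def nbhd_def by auto
  have finS: "finite S" using SV finV finite_subset by blast
  have sn: "s \<le> n" unfolding s_def using card_mono[OF finV SV] assms(2) by simp
  have n2: "n \<ge> 2"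
  proof -
    have "{u,v} \<subseteq> V" "u \<noteq> v" using uv unfolding nonadj_pair_def by auto
    thus ?thesis using card_mono[OF finV, of "{u,v}"] assms(2) by auto
  qed
  have cs: "c * real n \<le> real s" using assms(4) uv unfolding s_def S_def by blast
  show "edge_density E S \<ge> d" unfolding S_def[symmetric] d_def[symmetric]
  proof (cases "d \<le> 0")
    case True
    have "edge_density E S \<ge> 0" unfolding edge_density_def by simp
    thus ?thesis using True by linarith
  next
    case False
    have "1 / c < 2" using False unfolding d_def by simp
    hence "1 < 2 * c" using assms(3) by (simp add: divide_less_eq)
    hence c2: "c > 1/2" by simp
    have c1: "c \<le> 1"
    proof (rule ccontr)
      assume "\<not> c \<le> 1"
      hence "c * real n > real n" using n2 by simp
      thus False using cs sn by linarith
    qed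
    have d1: "d \<le> 1" unfolding d_def using c1 assms(3) by (simp add: field_simps)
    have "c * real n > 1"
    proof -
      have "real n \<ge> 2" using n2 by simp
      hence "c * real n \<ge> c * 2" using assms(3) by (intro mult_left_mono) auto
      thus ?thesis using c2 by linarith
    qed
    hence s2: "s \<ge> 2" using cs by linarith
    have key: "real (card {y\<in>S. E x y}) \<ge> (real s - 1) * d" if xS: "x \<in> S" for x
    proof (cases "\<forall>w\<in>V. w \<noteq> x \<longrightarrow> E x w")
      case True
      have "{y\<in>S. E x y} = S - {x}" using True SV G by auto
      hence "real (card {y\<in>S. E x y}) = real s - 1" using xS finS s_def s2 by (simp add: of_nat_diff)
      moreover have "real s - 1 \<ge> 0" using s2 by simp
      ultimately show ?thesis using d1 by (simp add: mult_left_le)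
    next
      case False
      then obtain w where w: "w \<in> V" "w \<noteq> x" "\<not> E x w" by auto
      have xV: "x \<in> V" using xS SV by auto
      have "nonadj_pair V E x w" unfolding nonadj_pair_def using w xV by auto
      hence cw: "real (card (common_nbhd V E x w)) \<ge> c * real n" using assms(4) by blast
      have finN: "finite (nbhd V E x)" using finV unfolding nbhd_def by simp
      have "card (common_nbhd V E x w) \<le> card (nbhd V E x)"
        unfolding common_nbhd_def by (rule card_mono[OF finN]) auto
      hence Nx: "real (card (nbhd V E x)) \<ge> c * real n" using cw by linarith
      have eq: "{y\<in>S. E x y} = nbhd V E x \<inter> S" unfolding nbhd_def using SV by auto
      have "card (nbhd V E x) + s = card (nbhd V E x \<union> S) + card (nbhd V E x \<inter> S)"
        unfolding s_def by (rule card_Un_Int[OF finN finS])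
      moreover have "card (nbhd V E x \<union> S) \<le> n"
        using card_mono[OF finV, of "nbhd V E x \<union> S"] SV assms(2) unfolding nbhd_def by auto
      ultimately have "real (card (nbhd V E x)) + real s \<le> real n + real (card (nbhd V E x \<inter> S))"
        by (metis of_nat_add of_nat_le_iff add_le_mono1)
      hence t: "real (card {y\<in>S. E x y}) \<ge> c * real n + real s - real n"
        unfolding eq using Nx by linarith
      have m: "(c - 1) * (c * real n) \<ge> (c - 1) * real s"
        using c1 cs by (intro mult_left_mono_neg) auto
      have "c * real n + real s - real n \<ge> real s * d"
      proof -
        have "c * (c * real n + real s - real n) \<ge> c * (real s * d)"
          unfolding d_def using m assms(3) by (simp add: algebra_simps)
        thus ?thesis using assms(3) by simp
      qed
      moreover have "real s * d \<ge> (real s - 1) * d" using \<open>\<not> d \<le> 0\<close> by simp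
      ultimately show ?thesis using t by linarith
    qed
    have "real s * ((real s - 1) * d) \<le> (\<Sum>x\<in>S. real (card {y\<in>S. E x y}))"
      using sum_bounded_below[of S "(real s - 1) * d" "\<lambda>x. real (card {y\<in>S. E x y})"] key
      unfolding s_def by auto
    also have "\<dots> = real (card (SIGMA x:S. {y\<in>S. E x y}))"
      using finS by simp
    also have "\<dots> \<le> 2 * real (induced_edges E S)"
    proof -
      have irr: "\<forall>u. \<not> E u u" using G by blast
      have "card (SIGMA x:S. {y\<in>S. E x y}) \<le> 2 * induced_edges E S"
        by (rule pairs_le_edges[where E=E, OF finS irr])
      hence "real (card (SIGMA x:S. {y\<in>S. E x y})) \<le> real (2 * induced_edges E S)"
        by (simp only: of_nat_le_iff)
      thus ?thesis by simp
    qed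
    finally have A: "real s * (real s - 1) * d \<le> 2 * real (induced_edges E S)" by (simp add: mult.assoc)
    have ch: "real (s choose 2) = real s * (real s - 1) / 2"
    proof -
      have "real (2 * (s choose 2)) = real (s * (s - 1))" by (simp only: two_choose)
      thus ?thesis using s2 by (simp add: of_nat_diff)
    qed
    have pos: "real (s choose 2) > 0" using s2 by simp
    show ?thesis unfolding edge_density_def s_def[symmetric]
    proof -
      have "real s * (real s - 1) = 2 * real (s choose 2)" using ch by simp
      hence "2 * real (s choose 2) * d \<le> 2 * real (induced_edges E S)" using A by simp
      hence "d * real (s choose 2) \<le> real (induced_edges E S)" by (simp add: mult.commute)
      thus "d \<le> real (induced_edges E S) / real (s choose 2)" using pos by (simp add: pos_le_divide_eq)
    qed
  qed
qed

end
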